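(* Let $X$ be a compact Hausdorff space, $A=C(X)$, and $H_A=l_2(A)$. Let $F\in H''_A$ and let $(F_1,F_2,\dots)\in H'_A$ be the sequence representing $F$, i.e. $F_i=F(\hat e_i)^*$. Let $\Phi:X\to[0,\infty)$ be the point-wise limit $\Phi(x)=\sum_{i=1}^\infty \overline{F_i(x)}F_i(x)$, and let $E\subseteq X$ be the set of points at which $\Phi$ is continuous. Then for every $x_0\in E$ and every $f=(f_1,f_2,\dots)\in H'_A$, the series $\sum_{i=1}^\infty \overline{F_i(x_0)}f_i(x_0)$ converges and its sum equals $F(f)(x_0)$, the value at $x_0$ of the continuous function $F(f)\in C(X)$.
   Context: $H_A=l_2(A)$ is the set of sequences $(a_1,a_2,\dots)$ in $A$ with $\sum_i a_i^*a_i$ norm convergent; it is a right Hilbert $A$-module with componentwise action and inner product $\langle a,b\rangle=\sum_i a_i^*b_i$. Its standard basis vectors are $e_i$ ($1$ in place $i$, $0$ elsewhere). The dual $H'_A$ is the set of bounded $A$-linear maps $H_A\to A$; for $A=C(X)$ it is identified (via $f\mapsto (f(e_i)^* )_i$, so that $f(x)=\sum_i f_i^*x_i$) with the set of sequences $(f_1,f_2,\dots)$, $f_i\in C(X)$, with $\sup_N\|\sum_{i=1}^N \overline{f_i}f_i\|<\infty$ (sup norm), the norm being $\|f\|^2=\sup_N\|\sum_{i=1}^N\overline{f_i}f_i\|$, and the right $A$-module structure being componentwise multiplication. The second dual $H''_A$ is the set of bounded $A$-linear maps $H'_A\to A$. For $i\ge1$, $\hat e_i\in H'_A$ denotes the sequence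 with $1$ in place $i$ and $0$ elsewhere (the image of $e_i$ under $m\mapsto\hat m$, $\hat m(x)=\langle m,x\rangle$). Each $F\in H''_A$ is represented by the sequence $(F_i)$, $F_i=F(\hat e_i)^*$; this is the canonical isometric embedding $H''_A\subseteq H'_A$. *)

theory Defs
  imports "HOL-Analysis.Analysis"
begin

text \<open>A = C(X): complex-valued continuous functions on the compact Hausdorff space X
(here the type 'a with the topology of its type class).
Elements of the dual H'_A are represented as sequences f :: nat => 'a => complex.\<close>

definition dual_seq :: "(nat \<Rightarrow> 'a::topological_space \<Rightarrow> complex) \<Rightarrow> bool" where
  "dual_seq f \<longleftrightarrow> (\<forall>i. continuous_on UNIV (f i)) \<and>
     (\<exists>B. \<forall>N x. (\<Sum>i<N. (cmod (f i x))\<^sup>2) \<le> B)"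

definition dual_norm :: "(nat \<Rightarrow> 'a::topological_space \<Rightarrow> complex) \<Rightarrow> real" where
  "dual_norm f = sqrt (SUP N. SUP x. (\<Sum>i<N. (cmod (f i x))\<^sup>2))"

text \<open>Second dual: bounded A-linear maps H'_A -> A = C(X)
(right module structure: componentwise multiplication).\<close>
definition bidual :: "((nat \<Rightarrow> 'a::topological_space \<Rightarrow> complex) \<Rightarrow> ('a \<Rightarrow> complex)) \<Rightarrow> bool" where
  "bidual F \<longleftrightarrow>
     (\<forall>f. dual_seq f \<longrightarrow> continuous_on UNIV (F f)) \<and>
     (\<forall>f g. dual_seq f \<longrightarrow> dual_seq g \<longrightarrow>
        F (\<lambda>i x. f i x + g i x) = (\<lambda>x. F f x + F g x)) \<and>
     (\<forall>f a. dual_seq f \<longrightarrow> continuous_on UNIV a \<longrightarrow>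
        F (\<lambda>i x. f i x * a x) = (\<lambda>x. F f x * a x)) \<and>
     (\<exists>K. \<forall>f. dual_seq f \<longrightarrow> (\<forall>x. cmod (F f x) \<le> K * dual_norm f))"

definition hat_e :: "nat \<Rightarrow> nat \<Rightarrow> 'a \<Rightarrow> complex" where
  "hat_e i = (\<lambda>j x. if j = i then 1 else 0)"

definition rep_seq :: "((nat \<Rightarrow> 'a \<Rightarrow> complex) \<Rightarrow> ('a \<Rightarrow> complex)) \<Rightarrow> nat \<Rightarrow> 'a \<Rightarrow> complex" where
  "rep_seq F i = (\<lambda>x. cnj (F (hat_e i) x))"

end

theory Submission
  imports Defs
begin

definition hd_seq :: "nat \<Rightarrow> (nat \<Rightarrow> 'a \<Rightarrow> complex) \<Rightarrow> nat \<Rightarrow> 'a \<Rightarrow> complex" where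
  "hd_seq M f = (\<lambda>i x. if i < M then f i x else 0)"
definition tl_seq :: "nat \<Rightarrow> (nat \<Rightarrow> 'a \<Rightarrow> complex) \<Rightarrow> nat \<Rightarrow> 'a \<Rightarrow> complex" where
  "tl_seq M f = (\<lambda>i x. if i < M then 0 else f i x)"

lemma dual_seq_le:
  assumes "dual_seq f" "\<And>i. continuous_on UNIV (g i)" "\<And>i x. cmod (g i x) \<le> cmod (f i x)"
  shows "dual_seq g"
proof -
  obtain B where B: "\<And>N x. (\<Sum>i<N. (cmod (f i x))\<^sup>2) \<le> B" using assms(1) unfolding dual_seq_def by blast
  have "(\<Sum>i<N. (cmod (g i x))\<^sup>2) \<le> B" for N x
    by (rule order_trans[OF sum_mono B]) (use assms(3) in \<open>auto intro: power_mono\<close>)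
  then show ?thesis using assms(2) unfolding dual_seq_def by blast
qed

lemma dual_seq_bound:
  assumes "dual_seq f" obtains B :: real where "\<And>N x. (\<Sum>i<N. (cmod (f i x))\<^sup>2) \<le> B" "0 \<le> B"
proof -
  obtain B where B: "\<And>N x. (\<Sum>i<N. (cmod (f i x))\<^sup>2) \<le> B" using assms(1) unfolding dual_seq_def by blast
  moreover have "0 \<le> B" using B[where N=0] by simp
  ultimately show ?thesis using that by blast
qed

lemma dual_seq_comp_bound:
  assumes "dual_seq f" obtains C where "\<And>i x. cmod (f i x) \<le> C"
proof -
  obtain B where B: "\<And>N x. (\<Sum>i<N. (cmod (f i x))\<^sup>2) \<le> B" "0 \<le> B" using dual_seq_bound[OF assms] by blast
  have "cmod (f i x) \<le> 1 + B" for i x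
  proof -
    have "(cmod (f i x))\<^sup>2 \<le> (\<Sum>j<Suc i. (cmod (f j x))\<^sup>2)"
      by (rule member_le_sum) auto
    also have "\<dots> \<le> B" by (rule B)
    finally have h: "(cmod (f i x))\<^sup>2 \<le> B" .
    show ?thesis
    proof (cases "cmod (f i x) \<le> 1")
      case True then show ?thesis using B(2) by linarith
    next
      case False
      then have "cmod (f i x) * 1 \<le> cmod (f i x) * cmod (f i x)" by (intro mult_left_mono) auto
      then have "cmod (f i x) \<le> (cmod (f i x))\<^sup>2" by (simp add: power2_eq_square)
      then show ?thesis using h by linarith
    qed
  qed
  then show ?thesis using that by blast
qed

lemma dual_seq_mult:
  assumes "dual_seq f" "continuous_on UNIV a" "\<And>x. cmod (a x) \<le> C"
  shows "dual_seq (\<lambda>i x. f i x * a x)"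
proof -
  obtain B where B: "\<And>N x. (\<Sum>i<N. (cmod (f i x))\<^sup>2) \<le> B" "0 \<le> B" using dual_seq_bound[OF assms(1)] by blast
  have C: "0 \<le> C" using assms(3) norm_ge_zero order_trans by blast
  have "(\<Sum>i<N. (cmod (f i x * a x))\<^sup>2) \<le> C\<^sup>2 * B" for N x
  proof -
    have "(\<Sum>i<N. (cmod (f i x * a x))\<^sup>2) = (cmod (a x))\<^sup>2 * (\<Sum>i<N. (cmod (f i x))\<^sup>2)"
      by (simp add: norm_mult power_mult_distrib sum_distrib_left mult.commute)
    also have "\<dots> \<le> C\<^sup>2 * B"
      by (rule mult_mono) (use assms(3) B C in \<open>auto intro: power_mono sum_nonneg\<close>)
    finally show ?thesis .
  qed
  moreover have "continuous_on UNIV (\<lambda>x. f i x * a x)" for i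
    using assms(1,2) unfolding dual_seq_def by (intro continuous_on_mult) auto
  ultimately show ?thesis unfolding dual_seq_def by blast
qed

lemma dual_seq_hat: "dual_seq (hat_e i)"
proof -
  have e: "(cmod (hat_e i j x))\<^sup>2 = (if j = i then 1 else 0)" for j x
    by (simp add: hat_e_def)
  have "(\<Sum>j<N. (cmod (hat_e i j x))\<^sup>2) \<le> 1" for N x
    unfolding e by simp
  then show ?thesis unfolding dual_seq_def hat_e_def by (auto intro!: continuous_intros)
qed

lemma dual_seq_hd: assumes "dual_seq f" shows "dual_seq (hd_seq M f)"
proof (rule dual_seq_le[OF assms])
  fix i show "continuous_on UNIV (hd_seq M f i)"
    using assms unfolding dual_seq_def hd_seq_def by (cases "i < M") auto
qed (auto simp: hd_seq_def)

lemma dual_seq_tl: assumes "dual_seq f" shows "dual_seq (tl_seq M f)"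
proof (rule dual_seq_le[OF assms])
  fix i show "continuous_on UNIV (tl_seq M f i)"
    using assms unfolding dual_seq_def tl_seq_def by (cases "i < M") auto
qed (auto simp: tl_seq_def)

lemma dual_norm_le:
  assumes "\<And>N x. (\<Sum>i<N. (cmod (f i x))\<^sup>2) \<le> \<delta>"
  shows "dual_norm f \<le> sqrt \<delta>"
  unfolding dual_norm_def
  by (rule real_sqrt_le_mono, rule cSUP_least, simp, rule cSUP_least, simp, rule assms)

lemma dual_norm_nonneg:
  assumes "dual_seq f" shows "0 \<le> dual_norm f"
proof -
  obtain B where B: "\<And>N x. (\<Sum>i<N. (cmod (f i x))\<^sup>2) \<le> B" using assms unfolding dual_seq_def by blast
  have b: "(SUP x. (\<Sum>i<N. (cmod (f i x))\<^sup>2)) \<le> B" for N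
    by (rule cSUP_least) (auto intro: B)
  have "(SUP x. (\<Sum>i<0. (cmod (f i x))\<^sup>2)) \<le> (SUP N. SUP x. (\<Sum>i<N. (cmod (f i x))\<^sup>2))"
    by (rule cSUP_upper) (simp, rule bdd_aboveI2[where M=B], rule b)
  then show ?thesis unfolding dual_norm_def by simp
qed

lemma bidual_cont: "bidual F \<Longrightarrow> dual_seq f \<Longrightarrow> continuous_on UNIV (F f)"
  unfolding bidual_def by blast
lemma bidual_add: "bidual F \<Longrightarrow> dual_seq f \<Longrightarrow> dual_seq g \<Longrightarrow>
   F (\<lambda>i x. f i x + g i x) = (\<lambda>x. F f x + F g x)"
  unfolding bidual_def by blast
lemma bidual_mult: "bidual F \<Longrightarrow> dual_seq f \<Longrightarrow> continuous_on UNIV a \<Longrightarrow>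
   F (\<lambda>i x. f i x * a x) = (\<lambda>x. F f x * a x)"
  unfolding bidual_def by blast
lemma bidual_bound: assumes "bidual F" obtains K where "0 \<le> K" "\<And>f x. dual_seq f \<Longrightarrow> cmod (F f x) \<le> K * dual_norm f"
proof -
  obtain K where K: "\<And>f x. dual_seq f \<Longrightarrow> cmod (F f x) \<le> K * dual_norm f"
    using assms unfolding bidual_def by blast
  have "cmod (F f x) \<le> \<bar>K\<bar> * dual_norm f" if "dual_seq f" for f x
  proof -
    have "K * dual_norm f \<le> \<bar>K\<bar> * dual_norm f"
      by (rule mult_right_mono) (auto intro: dual_norm_nonneg[OF that])
    then show ?thesis using K[OF that, of x] by linarith
  qed
  then show ?thesis using that[of "\<bar>K\<bar>"] by simp
qed

lemma bidual_zero: assumes "bidual F" shows "F (\<lambda>i x. 0) = (\<lambda>x. 0)"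
proof -
  have z: "dual_seq (\<lambda>i (x::'a). 0::complex)" unfolding dual_seq_def by auto
  have "F (\<lambda>i x. (\<lambda>i x. 0::complex) i x * (\<lambda>x. 0) x) = (\<lambda>x. F (\<lambda>i x. 0) x * (\<lambda>x. 0) x)"
    using bidual_mult[OF assms z continuous_on_const] .
  then show ?thesis by simp
qed

lemma F_hd:
  assumes "bidual F" "dual_seq f"
  shows "F (hd_seq M f) = (\<lambda>x. \<Sum>i<M. F (hat_e i) x * f i x)"
proof (induction M)
  case 0
  have "hd_seq 0 f = (\<lambda>i x. 0)" by (simp add: hd_seq_def)
  then show ?case using bidual_zero[OF assms(1)] by simp
next
  case (Suc M)
  obtain C where C: "\<And>i x. cmod (f i x) \<le> C" using dual_seq_comp_bound[OF assms(2)] by blast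
  have cf: "continuous_on UNIV (f M)" using assms(2) unfolding dual_seq_def by blast
  have eq: "hd_seq (Suc M) f = (\<lambda>i x. hd_seq M f i x + hat_e M i x * f M x)"
    by (auto simp: hd_seq_def hat_e_def fun_eq_iff)
  have d1: "dual_seq (hd_seq M f)" by (rule dual_seq_hd[OF assms(2)])
  have d2: "dual_seq (\<lambda>i x. hat_e M i x * f M x)"
    by (rule dual_seq_mult[OF dual_seq_hat cf C])
  have "F (hd_seq (Suc M) f) = (\<lambda>x. F (hd_seq M f) x + F (\<lambda>i x. hat_e M i x * f M x) x)"
    unfolding eq by (rule bidual_add[OF assms(1) d1 d2])
  also have "F (\<lambda>i x. hat_e M i x * f M x) = (\<lambda>x. F (hat_e M) x * f M x)"
    by (rule bidual_mult[OF assms(1) dual_seq_hat cf])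
  finally show ?case using Suc by simp
qed

lemma F_split:
  assumes "bidual F" "dual_seq f"
  shows "F f x = (\<Sum>i<M. F (hat_e i) x * f i x) + F (tl_seq M f) x"
proof -
  have eq: "f = (\<lambda>i x. hd_seq M f i x + tl_seq M f i x)"
    by (auto simp: hd_seq_def tl_seq_def fun_eq_iff)
  have "F f = (\<lambda>x. F (hd_seq M f) x + F (tl_seq M f) x)"
    apply (subst eq) by (rule bidual_add[OF assms(1) dual_seq_hd[OF assms(2)] dual_seq_tl[OF assms(2)]])
  then show ?thesis using F_hd[OF assms] by simp
qed


lemma cutoff:
  fixes y :: "'a::t2_space" and W :: "'a set"
  assumes "compact (UNIV::'a set)" "open W" "y \<in> W"
  obtains b :: "'a \<Rightarrow> real" where "continuous_on UNIV b" "b y = 1" "\<And>x. 0 \<le> b x \<and> b x \<le> 1" "\<And>x. x \<notin> W \<Longrightarrow> b x = 0"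
proof -
  have cs: "compact_space (euclidean::'a topology)"
    using assms(1) unfolding compact_space_def by simp
  have hs: "Hausdorff_space (euclidean::'a topology)"
    unfolding Hausdorff_space_def disjnt_def using separation_t2 by (metis open_openin)
  have "normal_space (euclidean::'a topology)"
    by (rule compact_Hausdorff_or_regular_imp_normal_space[OF cs]) (use hs in blast)
  then have cr: "completely_regular_space (euclidean::'a topology)"
    by (rule normal_imp_completely_regular_space) (use hs in blast)
  have cl: "closedin euclidean (- W)" using assms(2) by (metis closed_closedin closed_Compl)
  have "\<exists>f::'a\<Rightarrow>real. continuous_map euclidean (top_of_set {0..1}) f \<and> f y = 0 \<and> (f ` (-W) \<subseteq> {1})"
  proof -
    have "y \<in> topspace euclidean - (- W)" using assms(3) by simp
    then show ?thesis using cr cl unfolding completely_regular_space_def by blast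
  qed
  then obtain f :: "'a \<Rightarrow> real" where f: "continuous_map euclidean (top_of_set {0..1}) f" "f y = 0" "f ` (-W) \<subseteq> {1}"
    by blast
  have c: "continuous_on UNIV f" and r: "\<And>x. f x \<in> {0..1}"
    using f(1) by (auto simp: continuous_map_in_subtopology)
  have c2: "continuous_on UNIV (\<lambda>x. 1 - f x)" by (intro continuous_on_diff continuous_on_const c)
  show ?thesis
    apply (rule that[of "\<lambda>x. 1 - f x"])
    using c2 r f(2,3) by auto
qed

lemma sum_hd_le:
  fixes \<phi> :: "nat \<Rightarrow> real"
  assumes "\<And>i. 0 \<le> \<phi> i"
  shows "(\<Sum>i<M. if i < N then \<phi> i else 0) \<le> (\<Sum>i<N. \<phi> i)"
proof -
  have "(\<Sum>i<M. if i < N then \<phi> i else 0) = (\<Sum>i\<in>{..<M} \<inter> {..<N}. \<phi> i)"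
    by (simp add: sum.inter_restrict)
  also have "\<dots> \<le> (\<Sum>i<N. \<phi> i)"
    by (rule sum_mono2) (use assms in auto)
  finally show ?thesis .
qed

lemma sum_tl_le:
  fixes \<phi> :: "nat \<Rightarrow> real"
  assumes "\<And>i. 0 \<le> \<phi> i"
  shows "(\<Sum>i<P. if i < L then 0 else \<phi> i) \<le> (\<Sum>i<max P L. \<phi> i) - (\<Sum>i<L. \<phi> i)"
proof -
  have "(\<Sum>i<P. if i < L then 0 else \<phi> i) \<le> (\<Sum>i<max P L. if i < L then 0 else \<phi> i)"
    by (rule sum_mono2) (use assms in auto)
  also have "(\<Sum>i<max P L. if i < L then 0 else \<phi> i) = (\<Sum>i<max P L. \<phi> i) - (\<Sum>i<max P L. if i < L then \<phi> i else 0)"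
    by (simp add: sum_subtractf[symmetric] if_distrib cong: if_cong)
  also have "(\<Sum>i<max P L. if i < L then \<phi> i else 0) = (\<Sum>i\<in>{..<max P L} \<inter> {..<L}. \<phi> i)"
    by (simp add: sum.inter_restrict)
  also have "{..<max P L} \<inter> {..<L} = {..<L}" by auto
  finally show ?thesis .
qed

lemma rep_bound:
  fixes F :: "(nat \<Rightarrow> 'a::topological_space \<Rightarrow> complex) \<Rightarrow> ('a \<Rightarrow> complex)"
  assumes "bidual F" "compact (UNIV :: 'a set)"
  obtains C where "\<And>N x. (\<Sum>i<N. (cmod (F (hat_e i) x))\<^sup>2) \<le> C"
proof -
  obtain K where K0: "0 \<le> K" and K: "\<And>f x. dual_seq f \<Longrightarrow> cmod (F f x) \<le> K * dual_norm f"
    using bidual_bound[OF assms(1)] by blast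
  have "(\<Sum>i<N. (cmod (F (hat_e i) x))\<^sup>2) \<le> K\<^sup>2" for N x
  proof -
    define s where "s = (\<lambda>x. \<Sum>i<N. (cmod (F (hat_e i) x))\<^sup>2)"
    have cF: "continuous_on UNIV (F (hat_e i))" for i by (rule bidual_cont[OF assms(1) dual_seq_hat])
    have cs: "continuous_on UNIV s" unfolding s_def
      by (intro continuous_on_sum continuous_on_power continuous_on_norm cF)
    have "\<exists>y. \<forall>z. s z \<le> s y" using continuous_attains_sup[of UNIV s] assms(2) cs by simp
    then obtain y where y: "\<And>z. s z \<le> s y" by blast
    define w where "w = hd_seq N (\<lambda>i x. cnj (F (hat_e i) x))"
    have s0: "0 \<le> s y" unfolding s_def by (auto intro: sum_nonneg)
    have wb: "(\<Sum>i<M. (cmod (w i z))\<^sup>2) \<le> s y" for M z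
    proof -
      have "(\<Sum>i<M. (cmod (w i z))\<^sup>2) = (\<Sum>i<M. if i < N then (cmod (F (hat_e i) z))\<^sup>2 else 0)"
        unfolding w_def hd_seq_def by (intro sum.cong) auto
      also have "\<dots> \<le> s z" unfolding s_def by (rule sum_hd_le) auto
      also have "\<dots> \<le> s y" by (rule y)
      finally show ?thesis .
    qed
    have wc: "continuous_on UNIV (w i)" for i
      unfolding w_def hd_seq_def by (cases "i < N") (auto intro: continuous_on_cnj cF)
    have wd: "dual_seq w" unfolding dual_seq_def using wc wb by blast
    have "hd_seq N w = w" unfolding w_def hd_seq_def by (auto simp: fun_eq_iff)
    then have "F w y = (\<Sum>i<N. F (hat_e i) y * w i y)"
      using F_hd[OF assms(1) wd, of N] by (metis)
    also have "\<dots> = (\<Sum>i<N. complex_of_real ((cmod (F (hat_e i) y))\<^sup>2))"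
      unfolding w_def hd_seq_def by (intro sum.cong) (auto simp: complex_norm_square[symmetric] simp del: of_real_power)
    also have "\<dots> = complex_of_real (s y)" unfolding s_def by simp
    finally have "cmod (F w y) = s y" using s0 by simp
    then have "s y \<le> K * sqrt (s y)"
      using K[OF wd, of y] dual_norm_le[of w "s y", OF wb] K0
      by (metis mult_left_mono order_trans)
    then have "sqrt (s y) \<le> K"
    proof (cases "s y = 0")
      case False
      then have p: "0 < sqrt (s y)" using s0 by simp
      have "sqrt (s y) * sqrt (s y) \<le> K * sqrt (s y)" using \<open>s y \<le> K * sqrt (s y)\<close> s0 by simp
      then show ?thesis using p by (rule mult_right_le_imp_le)
    qed (use K0 in simp)
    then have "s y \<le> K\<^sup>2" using s0 by (metis real_sqrt_le_iff real_sqrt_pow2 sqrt_le_D)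
    then show ?thesis using y[of x] unfolding s_def by linarith
  qed
  then show ?thesis using that by blast
qed

lemma open_gt:
  fixes g :: "'a::topological_space \<Rightarrow> real"
  assumes "continuous_on UNIV g" shows "open {y. c < g y}"
  using open_Collect_less[OF continuous_on_const assms, of c] .

lemma isCont_nbhd_less:
  fixes \<psi> :: "'a::t2_space \<Rightarrow> real"
  assumes "isCont \<psi> x0" "\<psi> x0 < c"
  shows "\<exists>U. open U \<and> x0 \<in> U \<and> (\<forall>y\<in>U. \<psi> y < c)"
proof -
  have "(\<psi> \<longlongrightarrow> \<psi> x0) (at x0)" using assms(1) by (simp add: isCont_def)
  then have "eventually (\<lambda>y. \<psi> y \<in> {..<c}) (at x0)"
    using assms(2) unfolding tendsto_def by (metis lessThan_iff open_lessThan)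
  then obtain T where T: "open T" "x0 \<in> T" "\<And>y. y \<in> T \<Longrightarrow> y \<noteq> x0 \<Longrightarrow> \<psi> y < c"
    unfolding eventually_at_topological by auto
  show ?thesis using T assms(2) by (intro exI[of _ T]) auto
qed

lemma amgm:
  fixes a b t :: real
  assumes "0 < t"
  shows "a * b \<le> (t * a\<^sup>2 + b\<^sup>2 / t) / 2"
proof -
  have "0 \<le> (t * a - b)\<^sup>2 / t" using assms by simp
  also have "(t * a - b)\<^sup>2 / t = t * a\<^sup>2 - 2 * a * b + b\<^sup>2 / t"
    using assms by (simp add: field_simps power2_eq_square)
  finally show ?thesis by simp
qed

theorem lemma3p1:
  fixes F :: "(nat \<Rightarrow> 'a::t2_space \<Rightarrow> complex) \<Rightarrow> ('a \<Rightarrow> complex)"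
    and \<Phi> :: "'a \<Rightarrow> real" and E :: "'a set"
  assumes "compact (UNIV :: 'a set)"
    and "bidual F"
    and "\<Phi> = (\<lambda>x. \<Sum>i. Re (cnj (rep_seq F i x) * rep_seq F i x))"
    and "E = {x. isCont \<Phi> x}"
  shows "\<forall>x0\<in>E. \<forall>f. dual_seq f \<longrightarrow>
           (\<lambda>i. cnj (rep_seq F i x0) * f i x0) sums (F f x0)"
proof (intro ballI allI impI)
  fix x0 and f :: "nat \<Rightarrow> 'a \<Rightarrow> complex" assume x0: "x0 \<in> E" and fd: "dual_seq f"
  have cont: "isCont \<Phi> x0" using x0 assms(4) by simp
  define \<phi> where "\<phi> i x = (cmod (F (hat_e i) x))\<^sup>2" for i x
  obtain C where C: "\<And>N x. (\<Sum>i<N. \<phi> i x) \<le> C"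
    using rep_bound[OF assms(2,1)] unfolding \<phi>_def by blast
  have \<phi>0: "0 \<le> \<phi> i x" for i x unfolding \<phi>_def by simp
  have sm: "summable (\<lambda>i. \<phi> i x)" for x
    by (rule summableI_nonneg_bounded[OF \<phi>0 C])
  have \<Phi>eq: "\<Phi> x = (\<Sum>i. \<phi> i x)" for x
    unfolding assms(3) \<phi>_def rep_seq_def
    by (simp add: complex_mult_cnj cmod_power2 mult.commute)
  have c\<phi>: "continuous_on UNIV (\<phi> i)" for i unfolding \<phi>_def
    by (intro continuous_on_power continuous_on_norm bidual_cont[OF assms(2) dual_seq_hat])
  obtain K where K0: "0 \<le> K" and K: "\<And>f x. dual_seq f \<Longrightarrow> cmod (F f x) \<le> K * dual_norm f"
    using bidual_bound[OF assms(2)] by blast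
  obtain B where B: "\<And>N x. (\<Sum>i<N. (cmod (f i x))\<^sup>2) \<le> B" and B0: "0 \<le> B"
    using dual_seq_bound[OF fd] by blast
  have cf: "continuous_on UNIV (f i)" for i using fd unfolding dual_seq_def by blast
  have split: "F f x = (\<Sum>i<M. F (hat_e i) x * f i x) + F (tl_seq M f) x" for M x
    by (rule F_split[OF assms(2) fd])
  have key: "\<exists>N. \<forall>M\<ge>N. cmod (F (tl_seq M f) x0) \<le> \<gamma>" if \<gamma>: "0 < \<gamma>" for \<gamma>
  proof -
    define t where "t = 2 * (B + 1) / \<gamma>"
    have t0: "0 < t" unfolding t_def using \<gamma> B0 by simp
    define \<epsilon> where "\<epsilon> = \<gamma> / (2 * t)"
    have \<epsilon>0: "0 < \<epsilon>" unfolding \<epsilon>_def using \<gamma> t0 by simp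
    have te: "t * \<epsilon> = \<gamma> / 2" unfolding \<epsilon>_def using t0 by simp
    have bt: "B / t \<le> \<gamma> / 2"
    proof -
      have "B / t = B * \<gamma> / (2 * (B + 1))" unfolding t_def using \<gamma> B0 by (simp add: field_simps)
      also have "\<dots> \<le> (B + 1) * \<gamma> / (2 * (B + 1))"
        using \<gamma> B0 by (intro divide_right_mono mult_right_mono) auto
      also have "\<dots> = \<gamma> / 2" using B0 by (simp add: field_simps)
      finally show ?thesis .
    qed
    obtain N where N: "\<bar>(\<Sum>i<N. \<phi> i x0) - \<Phi> x0\<bar> < \<epsilon> / 2"
      using LIMSEQ_D[OF summable_LIMSEQ[OF sm[of x0]], of "\<epsilon> / 2"] \<epsilon>0 \<Phi>eq[of x0] by auto
    define \<psi> where "\<psi> x = \<Phi> x - (\<Sum>i<N. \<phi> i x)" for x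
    have cs: "continuous_on UNIV (\<lambda>x. \<Sum>i<N. \<phi> i x)"
      by (intro continuous_on_sum c\<phi>)
    have c\<psi>: "isCont \<psi> x0" unfolding \<psi>_def
      by (intro isCont_diff cont) (use cs continuous_on_eq_continuous_at[OF open_UNIV] in blast)
    have "\<psi> x0 < \<epsilon>" using N \<epsilon>0 unfolding \<psi>_def by linarith
    then obtain U where U: "open U" "x0 \<in> U" "\<And>y. y \<in> U \<Longrightarrow> \<psi> y < \<epsilon>"
      using isCont_nbhd_less[OF c\<psi>] by blast
    have tailF: "(\<Sum>i\<in>{M..<L}. \<phi> i y) \<le> \<epsilon>" if y: "y \<in> U" and MN: "N \<le> M" for y M L
    proof (cases "M \<le> L")
      case False then show ?thesis using \<epsilon>0 by simp
    next
      case True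
      have "(\<Sum>i\<in>{M..<L}. \<phi> i y) \<le> (\<Sum>i\<in>{N..<L}. \<phi> i y)"
        by (rule sum_mono2) (use MN \<phi>0 in auto)
      also have "(\<Sum>i<L. \<phi> i y) = (\<Sum>i<N. \<phi> i y) + (\<Sum>i\<in>{N..<L}. \<phi> i y)"
        using sum.atLeastLessThan_concat[of 0 N L "\<lambda>i. \<phi> i y"] True MN by (simp add: lessThan_atLeast0)
      then have "(\<Sum>i\<in>{N..<L}. \<phi> i y) = (\<Sum>i<L. \<phi> i y) - (\<Sum>i<N. \<phi> i y)" by simp
      also have "(\<Sum>i<L. \<phi> i y) \<le> \<Phi> y"
        unfolding \<Phi>eq by (rule sum_le_suminf[OF sm]) (auto intro: \<phi>0)
      finally have "(\<Sum>i\<in>{M..<L}. \<phi> i y) \<le> \<psi> y" unfolding \<psi>_def by simp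
      then show ?thesis using U(3)[OF y] by simp
    qed
    have pieceb: "cmod (\<Sum>i\<in>{M..<L}. F (hat_e i) y * f i y) \<le> \<gamma> / 2"
      if y: "y \<in> U" and MN: "N \<le> M" for y M L
    proof -
      have "cmod (\<Sum>i\<in>{M..<L}. F (hat_e i) y * f i y) \<le> (\<Sum>i\<in>{M..<L}. cmod (F (hat_e i) y) * cmod (f i y))"
        by (rule order_trans[OF norm_sum]) (simp add: norm_mult)
      also have "\<dots> \<le> (\<Sum>i\<in>{M..<L}. (t * \<phi> i y + (cmod (f i y))\<^sup>2 / t) / 2)"
        unfolding \<phi>_def by (intro sum_mono amgm t0)
      also have "\<dots> = (t * (\<Sum>i\<in>{M..<L}. \<phi> i y) + (\<Sum>i\<in>{M..<L}. (cmod (f i y))\<^sup>2) / t) / 2"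
        by (simp only: sum_divide_distrib[symmetric] sum.distrib sum_distrib_left[symmetric])
      also have "\<dots> \<le> (t * \<epsilon> + B / t) / 2"
      proof -
        have "(\<Sum>i\<in>{M..<L}. (cmod (f i y))\<^sup>2) \<le> (\<Sum>i<L. (cmod (f i y))\<^sup>2)"
          by (rule sum_mono2) auto
        also have "\<dots> \<le> B" by (rule B)
        finally have h2: "(\<Sum>i\<in>{M..<L}. (cmod (f i y))\<^sup>2) / t \<le> B / t"
          using t0 by (simp add: divide_right_mono)
        have h1: "t * (\<Sum>i\<in>{M..<L}. \<phi> i y) \<le> t * \<epsilon>"
          using tailF[OF y MN] t0 by simp
        show ?thesis using h1 h2 by (simp only: divide_right_mono add_mono)
      qed
      also have "\<dots> \<le> \<gamma> / 2" using te bt by simp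
      finally show ?thesis .
    qed
    show ?thesis
    proof (intro exI allI impI)
      fix M assume MN: "N \<le> M"
      define D where "D = F (tl_seq M f)"
      have cD: "continuous_on UNIV D" unfolding D_def by (rule bidual_cont[OF assms(2) dual_seq_tl[OF fd]])
      show "cmod (F (tl_seq M f) x0) \<le> \<gamma>"
      proof (rule ccontr)
        assume "\<not> ?thesis"
        then have gx0: "\<gamma> < cmod (D x0)" unfolding D_def by simp
        define V where "V = U \<inter> {y. \<gamma> < cmod (D y)}"
        have oV: "open V" unfolding V_def
          by (intro open_Int U(1) open_gt continuous_on_norm cD)
        have x0V: "x0 \<in> V" unfolding V_def using U(2) gx0 by simp
        define \<rho> where "\<rho> P y = (\<Sum>i<P. (cmod (f i y))\<^sup>2)" for P y
        have c\<rho>: "continuous_on UNIV (\<rho> P)" for P unfolding \<rho>_def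
          by (intro continuous_on_sum continuous_on_power continuous_on_norm cf)
        define S where "S = {\<rho> P y | P y. y \<in> V}"
        have Sne: "S \<noteq> {}" unfolding S_def using x0V by blast
        have bS: "bdd_above S" unfolding S_def \<rho>_def by (rule bdd_aboveI[where M=B]) (auto intro: B)
        define \<delta> where "\<delta> = (\<gamma> / (2 * (K + 1)))\<^sup>2"
        have \<delta>0: "0 < \<delta>" unfolding \<delta>_def using \<gamma> K0 by simp
        have sd: "sqrt \<delta> = \<gamma> / (2 * (K + 1))" unfolding \<delta>_def using \<gamma> K0 by simp
        obtain z where zS: "z \<in> S" and z: "Sup S - \<delta> < z"
          using less_cSupD[OF Sne, of "Sup S - \<delta>"] \<delta>0 by auto
        then obtain P1 y1 where y1V: "y1 \<in> V" and y1: "Sup S - \<delta> < \<rho> P1 y1"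
          unfolding S_def by blast
        define W where "W = V \<inter> {y. Sup S - \<delta> < \<rho> P1 y}"
        have oW: "open W" unfolding W_def by (intro open_Int oV open_gt c\<rho>)
        have y1W: "y1 \<in> W" unfolding W_def using y1V y1 by simp
        obtain b :: "'a \<Rightarrow> real" where cb: "continuous_on UNIV b" and b1: "b y1 = 1" and b01: "\<And>x. 0 \<le> b x \<and> b x \<le> 1"
          and bW: "\<And>x. x \<notin> W \<Longrightarrow> b x = 0"
          using cutoff[OF assms(1) oW y1W] by blast
        define L where "L = max P1 M"
        have cbc: "continuous_on UNIV (\<lambda>x. complex_of_real (b x))" using cb by simp
        define h where "h = (\<lambda>i x. tl_seq L f i x * complex_of_real (b x))"
        have hd: "dual_seq h" unfolding h_def
          by (rule dual_seq_mult[OF dual_seq_tl[OF fd] cbc, of 1]) (use b01 in simp)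
        have hb: "(\<Sum>i<P. (cmod (h i x))\<^sup>2) \<le> \<delta>" for P x
        proof -
          have eq: "(\<Sum>i<P. (cmod (h i x))\<^sup>2) = (b x)\<^sup>2 * (\<Sum>i<P. if i < L then 0 else (cmod (f i x))\<^sup>2)"
            unfolding h_def tl_seq_def sum_distrib_left
            by (intro sum.cong) (auto simp: norm_mult power_mult_distrib)
          show ?thesis
          proof (cases "x \<in> W")
            case False then show ?thesis using eq bW \<delta>0 by simp
          next
            case True
            then have xV: "x \<in> V" unfolding W_def by simp
            have s1: "(\<Sum>i<P. if i < L then 0 else (cmod (f i x))\<^sup>2) \<le> \<rho> (max P L) x - \<rho> L x"
              unfolding \<rho>_def by (rule sum_tl_le) simp
            have s2: "\<rho> (max P L) x \<le> Sup S"
              by (rule cSup_upper[OF _ bS]) (use xV in \<open>auto simp: S_def\<close>)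
            have s3: "\<rho> P1 x \<le> \<rho> L x" unfolding \<rho>_def L_def
              by (rule sum_mono2) auto
            have s4: "Sup S - \<delta> < \<rho> P1 x" using True unfolding W_def by simp
            have s5: "0 \<le> (\<Sum>i<P. if i < L then 0 else (cmod (f i x))\<^sup>2)"
              by (rule sum_nonneg) simp
            have "(b x)\<^sup>2 \<le> 1" using b01[of x] by (simp add: power_le_one)
            then have "(b x)\<^sup>2 * (\<Sum>i<P. if i < L then 0 else (cmod (f i x))\<^sup>2) \<le> 1 * (\<Sum>i<P. if i < L then 0 else (cmod (f i x))\<^sup>2)"
              using s5 by (intro mult_right_mono) auto
            then show ?thesis using eq s1 s2 s3 s4 by linarith
          qed
        qed
        have "dual_norm h \<le> sqrt \<delta>" by (rule dual_norm_le[OF hb])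
        then have "cmod (F h y1) \<le> K * (\<gamma> / (2 * (K + 1)))"
          using K[OF hd, of y1] K0 sd by (metis mult_left_mono order_trans)
        also have "\<dots> < \<gamma> / 2"
        proof -
          have "K * (\<gamma> / (2 * (K + 1))) = (K / (K + 1)) * (\<gamma> / 2)" using K0 by (simp add: field_simps)
          also have "\<dots> < 1 * (\<gamma> / 2)" using K0 \<gamma> by (intro mult_strict_right_mono) auto
          finally show ?thesis by simp
        qed
        finally have hF: "cmod (F h y1) < \<gamma> / 2" .
        have "F h = (\<lambda>x. F (tl_seq L f) x * complex_of_real (b x))"
          unfolding h_def by (rule bidual_mult[OF assms(2) dual_seq_tl[OF fd] cbc])
        then have Fh: "F h y1 = F (tl_seq L f) y1" using b1 by simp
        have hML: "M \<le> L" unfolding L_def by simp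
        have y1U: "y1 \<in> U" using y1V unfolding V_def by simp
        have "(\<Sum>i<L. F (hat_e i) y1 * f i y1) = (\<Sum>i<M. F (hat_e i) y1 * f i y1) + (\<Sum>i\<in>{M..<L}. F (hat_e i) y1 * f i y1)"
          using sum.atLeastLessThan_concat[of 0 M L "\<lambda>i. F (hat_e i) y1 * f i y1"] hML by (simp add: lessThan_atLeast0)
        then have "D y1 = (\<Sum>i\<in>{M..<L}. F (hat_e i) y1 * f i y1) + F h y1"
          using split[of y1 M] split[of y1 L] Fh unfolding D_def by simp
        then have "cmod (D y1) \<le> cmod (\<Sum>i\<in>{M..<L}. F (hat_e i) y1 * f i y1) + cmod (F h y1)"
          by (metis norm_triangle_ineq)
        also have "\<dots> < \<gamma>" using pieceb[OF y1U MN, of L] hF by simp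
        finally have "cmod (D y1) < \<gamma>" .
        moreover have "\<gamma> < cmod (D y1)" using y1V unfolding V_def by simp
        ultimately show False by simp
      qed
    qed
  qed
  show "(\<lambda>i. cnj (rep_seq F i x0) * f i x0) sums (F f x0)"
    unfolding sums_def
  proof (rule LIMSEQ_I)
    fix r :: real assume r: "0 < r"
    obtain N where N: "\<And>M. N \<le> M \<Longrightarrow> cmod (F (tl_seq M f) x0) \<le> r / 2"
      using key[of "r / 2"] r by auto
    have "norm ((\<Sum>i<n. cnj (rep_seq F i x0) * f i x0) - F f x0) < r" if "N \<le> n" for n
    proof -
      have "(\<Sum>i<n. cnj (rep_seq F i x0) * f i x0) - F f x0 = - F (tl_seq n f) x0"
        using split[of x0 n] by (simp add: rep_seq_def)
      then show ?thesis using N[OF that] r by simp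
    qed
    then show "\<exists>no. \<forall>n\<ge>no. norm ((\<Sum>i<n. cnj (rep_seq F i x0) * f i x0) - F f x0) < r" by blast
  qed
qed

end
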